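(* For all integers $n\ge1$, $k\ge1$ and $0\le p\le n$, $$\sum_{j=0}^p(-1)^j\binom{n-j}{p-j}\binom{n+k-j}{k}\binom{n+1}{j}=\binom{n+k-p}{k}\binom{k-1}{p}=\sum_{s=p}^n\binom{s}{p}\binom{k-1}{s}\binom{n+1}{n-s}.$$ *)

theory Defs
  imports Main
begin
end

theory Submission
  imports Defs
begin

lemma tri: "(a choose j) * ((a - j) choose t) = (a choose t) * ((a - t) choose (j::nat))"
proof (cases "j + t \<le> a")
  case True
  have 1: "(a choose (j+t)) * ((j+t) choose j) = (a choose j) * ((a - j) choose t)"
    using choose_mult[of j "j+t" a] True by simp
  have 2: "(a choose (j+t)) * ((j+t) choose t) = (a choose t) * ((a - t) choose j)"
    using choose_mult[of t "j+t" a] True by simp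
  have "(j+t) choose j = (j+t) choose t" using binomial_symmetric[of j "j+t"] by simp
  then show ?thesis using 1 2 by simp
next
  case False
  have "(a choose j) * ((a - j) choose t) = 0"
    using False by (cases "j \<le> a") (auto simp: binomial_eq_0)
  moreover have "(a choose t) * ((a - t) choose j) = 0"
    using False by (cases "t \<le> a") (auto simp: binomial_eq_0)
  ultimately show ?thesis by metis
qed

lemma pasc: "(Suc m choose j) = (m choose j) + (if j = 0 then 0 else m choose (j - 1))"
  by (cases j) auto

lemma alt:
  "m \<le> n \<Longrightarrow> p \<le> n \<Longrightarrow>
   (\<Sum>j=0..p. (-1::int)^j * int (m choose j) * int ((n-j) choose (p-j))) = int ((n-m) choose p)"
proof (induction m arbitrary: n p)
  case 0
  then show ?case by (simp add: sum.atLeast_Suc_atMost, intro sum.neutral, simp)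
next
  case (Suc m)
  show ?case
  proof (cases p)
    case 0
    then show ?thesis by simp
  next
    case (Suc q)
    have n1: "n \<ge> 1" using Suc.prems by simp
    have "(\<Sum>j=0..p. (-1::int)^j * int (Suc m choose j) * int ((n-j) choose (p-j)))
      = (\<Sum>j=0..p. (-1::int)^j * int (m choose j) * int ((n-j) choose (p-j)))
        + (\<Sum>j=0..p. (-1::int)^j * int (if j = 0 then 0 else m choose (j - 1)) * int ((n-j) choose (p-j)))"
      by (subst sum.distrib[symmetric], rule sum.cong, simp, subst pasc, simp add: algebra_simps)
    also have "(\<Sum>j=0..p. (-1::int)^j * int (m choose j) * int ((n-j) choose (p-j))) = int ((n-m) choose p)"
      using Suc.IH[of n p] Suc.prems by simp
    also have "(\<Sum>j=0..p. (-1::int)^j * int (if j = 0 then 0 else m choose (j - 1)) * int ((n-j) choose (p-j)))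
       = (\<Sum>j=Suc 0..Suc q. (-1::int)^j * int (m choose (j - 1)) * int ((n-j) choose (Suc q-j)))"
      unfolding Suc by (simp add: sum.atLeast_Suc_atMost)
    also have "\<dots> = (\<Sum>i=0..q. (-1::int)^(Suc i) * int (m choose i) * int (((n - 1)-i) choose (q-i)))"
      by (subst sum.shift_bounds_cl_Suc_ivl) simp
    also have "\<dots> = - (\<Sum>i=0..q. (-1::int)^i * int (m choose i) * int (((n - 1)-i) choose (q-i)))"
      by (simp add: sum_negf[symmetric])
    also have "(\<Sum>i=0..q. (-1::int)^i * int (m choose i) * int (((n - 1)-i) choose (q-i))) = int ((n - 1 - m) choose q)"
      using Suc.IH[of "n - 1" q] Suc.prems \<open>p = Suc q\<close> by simp
    finally show ?thesis
      using Suc.prems \<open>p = Suc q\<close>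
      by (simp add: Suc_diff_Suc[symmetric])
  qed
qed

lemma V1:
  assumes "k \<ge> 1" "N \<le> n"
  shows "((N + k) choose k) = (\<Sum>s=0..n. ((k-1) choose s) * ((N+1) choose (Suc s)))"
proof -
  have "(\<Sum>s\<le>N. ((k-1) choose s) * ((N+1) choose (N - s))) = ((k - 1 + (N+1)) choose N)"
    by (rule vandermonde)
  also have "(k - 1 + (N+1)) = N + k" using assms by simp
  also have "(N + k) choose N = (N + k) choose k" using binomial_symmetric[of N "N+k"] by simp
  finally have 1: "(\<Sum>s\<le>N. ((k-1) choose s) * ((N+1) choose (N - s))) = (N + k) choose k" .
  have 2: "(\<Sum>s\<le>N. ((k-1) choose s) * ((N+1) choose (N - s)))
      = (\<Sum>s\<in>{0..N}. ((k-1) choose s) * ((N+1) choose (Suc s)))"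
    unfolding atLeast0AtMost[symmetric]
  proof (rule sum.cong)
    fix s assume "s \<in> {0..N}"
    then have "(N+1) choose (Suc s) = (N+1) choose (N+1 - Suc s)"
      by (intro binomial_symmetric) simp
    then show "((k-1) choose s) * ((N+1) choose (N - s)) = ((k-1) choose s) * ((N+1) choose (Suc s))"
      by simp
  qed simp
  have 3: "(\<Sum>s\<in>{0..N}. ((k-1) choose s) * ((N+1) choose (Suc s)))
      = (\<Sum>s=0..n. ((k-1) choose s) * ((N+1) choose (Suc s)))"
    by (rule sum.mono_neutral_left) (use assms in auto)
  show ?thesis using 1 2 3 by simp
qed

lemma E2:
  assumes "k \<ge> 1" "p \<le> n"
  shows "(\<Sum>s=p..n. (s choose p) * ((k-1) choose s) * ((n+1) choose (n-s)))
       = ((n+k-p) choose k) * ((k-1) choose p)"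
proof (cases "p \<le> k - 1")
  case True
  have "(\<Sum>s=p..n. (s choose p) * ((k-1) choose s) * ((n+1) choose (n-s)))
      = (\<Sum>s=p..n. ((k-1) choose p) * (((k-1-p) choose (s-p)) * ((n+1) choose (n-s))))"
  proof (rule sum.cong)
    fix s assume s: "s \<in> {p..n}"
    have "(s choose p) * ((k-1) choose s) = ((k-1) choose p) * ((k-1-p) choose (s-p))"
    proof (cases "s \<le> k - 1")
      case True
      then show ?thesis using choose_mult[of p s "k-1"] s by (simp add: mult.commute)
    next
      case False
      then show ?thesis using s by (simp add: binomial_eq_0; arith)
    qed
    then show "(s choose p) * ((k-1) choose s) * ((n+1) choose (n-s))
      = ((k-1) choose p) * (((k-1-p) choose (s-p)) * ((n+1) choose (n-s)))" by simp
  qed simp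
  also have "\<dots> = ((k-1) choose p) * (\<Sum>s=p..n. ((k-1-p) choose (s-p)) * ((n+1) choose (n-s)))"
    by (simp add: sum_distrib_left)
  also have "(\<Sum>s=p..n. ((k-1-p) choose (s-p)) * ((n+1) choose (n-s)))
      = (\<Sum>t=0..n-p. ((k-1-p) choose t) * ((n+1) choose (n-p-t)))"
    using sum.shift_bounds_cl_nat_ivl[of "\<lambda>s. ((k-1-p) choose (s-p)) * ((n+1) choose (n-s))" 0 p "n-p"]
      assms by (simp add: add.commute diff_diff_add)
  also have "\<dots> = (k - 1 - p + (n+1)) choose (n-p)"
    unfolding atLeast0AtMost by (rule vandermonde)
  also have "k - 1 - p + (n+1) = n + k - p" using True assms by simp
  also have "(n + k - p) choose (n-p) = (n+k-p) choose k"
    using binomial_symmetric[of "n-p" "n+k-p"] assms by simp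
  finally show ?thesis by (simp add: mult.commute)
next
  case False
  then have "\<forall>s\<in>{p..n}. (k-1) choose s = 0" by (auto simp: binomial_eq_0)
  then show ?thesis using False by (simp add: binomial_eq_0)
qed

lemma E1:
  assumes "k \<ge> 1" "p \<le> n"
  shows "(\<Sum>j=0..p. (-1::int)^j * int ((n - j) choose (p - j)) * int ((n + k - j) choose k)
            * int ((n + 1) choose j))
       = (\<Sum>s=p..n. int (s choose p) * int ((k - 1) choose s) * int ((n + 1) choose (n - s)))"
proof -
  have "(\<Sum>j=0..p. (-1::int)^j * int ((n - j) choose (p - j)) * int ((n + k - j) choose k)
            * int ((n + 1) choose j))
     = (\<Sum>j=0..p. \<Sum>s=0..n. (-1::int)^j * int ((n - j) choose (p - j)) * int ((k-1) choose s)
            * int ((n+1) choose (Suc s)) * int ((n - s) choose j))"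
  proof (rule sum.cong)
    fix j assume j: "j \<in> {0..p}"
    have v: "((n - j) + k) choose k = (\<Sum>s=0..n. ((k-1) choose s) * ((n - j + 1) choose (Suc s)))"
      by (rule V1) (use assms j in auto)
    have a: "n - j + k = n + k - j" "n - j + 1 = n + 1 - j" using assms j by auto
    have eq: "int ((n + k - j) choose k) = (\<Sum>s=0..n. int ((k-1) choose s) * int ((n + 1 - j) choose (Suc s)))"
      using v unfolding a by (simp only: of_nat_sum of_nat_mult)
    have "(-1::int)^j * int ((n - j) choose (p - j)) * int ((n + k - j) choose k)
            * int ((n + 1) choose j)
        = (\<Sum>s=0..n. (-1::int)^j * int ((n - j) choose (p - j)) * int ((k-1) choose s) *
            int (((n + 1) choose j) * ((n + 1 - j) choose (Suc s))))"
      unfolding eq sum_distrib_left sum_distrib_right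
      by (rule sum.cong) (simp_all only: of_nat_mult ac_simps)
    also have "\<dots> = (\<Sum>s=0..n. (-1::int)^j * int ((n - j) choose (p - j)) * int ((k-1) choose s)
            * int ((n+1) choose (Suc s)) * int ((n - s) choose j))"
    proof (rule sum.cong)
      fix s
      have "((n + 1) choose j) * ((n + 1 - j) choose (Suc s)) = ((n+1) choose (Suc s)) * ((n - s) choose j)"
        using tri[of "n+1" j "Suc s"] by (simp del: binomial_Suc_Suc)
      then show "(-1::int)^j * int ((n - j) choose (p - j)) * int ((k-1) choose s) *
            int (((n + 1) choose j) * ((n + 1 - j) choose (Suc s))) = (-1::int)^j * int ((n - j) choose (p - j)) * int ((k-1) choose s)
            * int ((n+1) choose (Suc s)) * int ((n - s) choose j)"
        by (simp only: of_nat_mult ac_simps)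
    qed simp
    finally show "(-1::int)^j * int ((n - j) choose (p - j)) * int ((n + k - j) choose k)
            * int ((n + 1) choose j) = (\<Sum>s=0..n. (-1::int)^j * int ((n - j) choose (p - j)) * int ((k-1) choose s)
            * int ((n+1) choose (Suc s)) * int ((n - s) choose j))" .
  qed simp
  also have "\<dots> = (\<Sum>s=0..n. \<Sum>j=0..p. (-1::int)^j * int ((n - j) choose (p - j)) * int ((k-1) choose s)
            * int ((n+1) choose (Suc s)) * int ((n - s) choose j))"
    by (rule sum.swap)
  also have "\<dots> = (\<Sum>s=0..n. int ((k-1) choose s) * int ((n+1) choose (Suc s)) * int (s choose p))"
  proof (rule sum.cong)
    fix s assume s: "s \<in> {0..n}"
    have "(\<Sum>j=0..p. (-1::int)^j * int ((n - s) choose j) * int ((n-j) choose (p-j))) = int (s choose p)"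
      using alt[of "n - s" n p] s assms by simp
    then show "(\<Sum>j=0..p. (-1::int)^j * int ((n - j) choose (p - j)) * int ((k-1) choose s)
            * int ((n+1) choose (Suc s)) * int ((n - s) choose j))
          = int ((k-1) choose s) * int ((n+1) choose (Suc s)) * int (s choose p)"
    proof -
      have "(\<Sum>j=0..p. (-1::int)^j * int ((n - j) choose (p - j)) * int ((k-1) choose s)
            * int ((n+1) choose (Suc s)) * int ((n - s) choose j))
        = (int ((k-1) choose s) * int ((n+1) choose (Suc s))) *
          (\<Sum>j=0..p. (-1::int)^j * int ((n - s) choose j) * int ((n-j) choose (p-j)))"
        unfolding sum_distrib_left by (rule sum.cong) (simp_all only: ac_simps)
      then show ?thesis using \<open>(\<Sum>j=0..p. (-1::int)^j * int ((n - s) choose j) * int ((n-j) choose (p-j))) = int (s choose p)\<close>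
        by (simp only:)
    qed
  qed simp
  also have "\<dots> = (\<Sum>s=p..n. int ((k-1) choose s) * int ((n+1) choose (Suc s)) * int (s choose p))"
    by (rule sum.mono_neutral_right) (auto simp: binomial_eq_0)
  also have "\<dots> = (\<Sum>s=p..n. int (s choose p) * int ((k - 1) choose s) * int ((n + 1) choose (n - s)))"
  proof (rule sum.cong)
    fix s assume s: "s \<in> {p..n}"
    have "(n+1) choose (Suc s) = (n+1) choose (n + 1 - Suc s)"
      using s by (intro binomial_symmetric) simp
    then show "int ((k-1) choose s) * int ((n+1) choose (Suc s)) * int (s choose p)
        = int (s choose p) * int ((k - 1) choose s) * int ((n + 1) choose (n - s))" by simp
  qed simp
  finally show ?thesis .
qed

theorem mainTheorem6:
  fixes n k p :: nat
  assumes "n \<ge> 1" and "k \<ge> 1" and "p \<le> n"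
  shows "(\<Sum>j=0..p. (-1::int)^j * int ((n - j) choose (p - j)) * int ((n + k - j) choose k)
            * int ((n + 1) choose j)) = int ((n + k - p) choose k) * int ((k - 1) choose p)
       \<and> int ((n + k - p) choose k) * int ((k - 1) choose p)
           = (\<Sum>s=p..n. int (s choose p) * int ((k - 1) choose s) * int ((n + 1) choose (n - s)))"
proof -
  have e2: "(\<Sum>s=p..n. int (s choose p) * int ((k - 1) choose s) * int ((n + 1) choose (n - s)))
      = int ((n + k - p) choose k) * int ((k - 1) choose p)"
    using arg_cong[OF E2[OF assms(2,3)], of int] by simp
  show ?thesis using E1[OF assms(2,3)] e2 by simp
qed

end
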